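(* Fix a positive integer $n$ and let $f_n(z)=\frac{z^n(2-z)}{2z-1}$, defined on $\mathbb{D}\setminus\{1/2\}$. Then $f_n\in\mathcal{S}_1$, and there exist $\delta_n>0$ and $\delta_n'>0$ such that: $P_n(f_n;z_1,\dots,z_n)$ is positive semidefinite for all distinct $z_1,\dots,z_n$ with $|z_i|<\delta_n$; and $P_{n+1}(f_n;z_1,\dots,z_{n+1})$ has exactly one negative eigenvalue for all distinct $z_1,\dots,z_{n+1}$ with $|z_i|<\delta_n'$.
   Context: $\mathbb{D}$ is the open unit disk. Pick matrix: $P_n(f;z_1,\dots,z_n)=\left[\frac{1-f(z_i)\overline{f(z_j)}}{1-z_i\overline{z_j}}\right]_{i,j=1}^n$. $\mathcal{S}_\kappa$: functions defined on $\mathbb{D}\setminus\Lambda$ for a discrete $\Lambda$ (at most countable, accumulating only on the unit circle) all of whose Pick matrices at distinct points have at most $\kappa$ negative eigenvalues, at least one having exactly $\kappa$. *)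

theory Defs
  imports "HOL-Analysis.Analysis" "Jordan_Normal_Form.Char_Poly" "Jordan_Normal_Form.Schur_Decomposition"
begin

definition pick_matrix :: "(complex \<Rightarrow> complex) \<Rightarrow> nat \<Rightarrow> (nat \<Rightarrow> complex) \<Rightarrow> complex mat" where
  "pick_matrix f n z = mat n n (\<lambda>(i,j). (1 - f (z i) * cnj (f (z j))) / (1 - z i * cnj (z j)))"

definition num_neg_eigenvalues :: "complex mat \<Rightarrow> nat" where
  "num_neg_eigenvalues A =
     (\<Sum>r \<in> {r. eigenvalue A r \<and> r \<in> \<real> \<and> Re r < 0}. Polynomial.order r (char_poly A))"

definition pos_semidef :: "complex mat \<Rightarrow> bool" where
  "pos_semidef A \<longleftrightarrow> (\<exists>n. A \<in> carrier_mat n n \<and> mat_adjoint A = A \<and>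
      (\<forall>v \<in> carrier_vec n. 0 \<le> Re ((A *\<^sub>v v) \<bullet>c v) \<and> Im ((A *\<^sub>v v) \<bullet>c v) = 0))"

definition admissible_exc :: "complex set \<Rightarrow> bool" where
  "admissible_exc \<Lambda> \<longleftrightarrow> \<Lambda> \<subseteq> ball 0 1 \<and> countable \<Lambda> \<and> (\<forall>z \<in> ball 0 1. \<not> z islimpt \<Lambda>)"

definition S_kappa :: "nat \<Rightarrow> complex set \<Rightarrow> (complex \<Rightarrow> complex) \<Rightarrow> bool" where
  "S_kappa \<kappa> \<Lambda> f \<longleftrightarrow> admissible_exc \<Lambda> \<and>
     (\<forall>n z. inj_on z {..<n} \<and> z ` {..<n} \<subseteq> ball 0 1 - \<Lambda> \<longrightarrow>
        num_neg_eigenvalues (pick_matrix f n z) \<le> \<kappa>) \<and>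
     (\<exists>n z. inj_on z {..<n} \<and> z ` {..<n} \<subseteq> ball 0 1 - \<Lambda> \<and>
        num_neg_eigenvalues (pick_matrix f n z) = \<kappa>)"

end

theory Submission
  imports Defs
begin


lemma adj_dims[simp]: "dim_row (mat_adjoint A) = dim_col A" "dim_col (mat_adjoint A) = dim_row A"
  unfolding mat_adjoint_def by (auto simp: mat_of_rows_def)

lemma adj_index[simp]: "i < dim_col A \<Longrightarrow> j < dim_row A \<Longrightarrow> mat_adjoint A $$ (i,j) = cnj (A $$ (j,i))"
  unfolding mat_adjoint_def by (simp add: mat_of_rows_index)

lemma adj_carrier[simp]: "A \<in> carrier_mat n m \<Longrightarrow> mat_adjoint A \<in> carrier_mat m n"
  by (metis adj_dims carrier_matD carrier_matI)

lemma adj_adj[simp]: "mat_adjoint (mat_adjoint (A :: complex mat)) = A"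
  by (rule eq_matI) auto

lemma adj_one[simp]: "mat_adjoint (1\<^sub>m n :: complex mat) = 1\<^sub>m n"
  by (rule eq_matI) auto
lemma adj_mult: assumes "(A :: complex mat) \<in> carrier_mat n m" "B \<in> carrier_mat m k"
  shows "mat_adjoint (A * B) = mat_adjoint B * mat_adjoint A"
proof (rule eq_matI)
  fix i j assume ij: "i < dim_row (mat_adjoint B * mat_adjoint A)" "j < dim_col (mat_adjoint B * mat_adjoint A)"
  hence i: "i < k" and j: "j < n" using assms by auto
  have "mat_adjoint (A * B) $$ (i, j) = cnj (row A j \<bullet> col B i)" using i j assms by auto
  also have "\<dots> = row (mat_adjoint B) i \<bullet> col (mat_adjoint A) j"
    using i j assms unfolding scalar_prod_def
    by (auto simp: sum_conjugate mult.commute intro!: sum.cong)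
  finally show "mat_adjoint (A * B) $$ (i, j) = (mat_adjoint B * mat_adjoint A) $$ (i, j)"
    using i j assms by auto
qed (insert assms, auto)

lemma adj_mult_vec: assumes "(A :: complex mat) \<in> carrier_mat n m" "x \<in> carrier_vec m" "y \<in> carrier_vec n"
  shows "(A *\<^sub>v x) \<bullet>c y = x \<bullet>c (mat_adjoint A *\<^sub>v y)"
proof -
  have "(A *\<^sub>v x) \<bullet>c y = (\<Sum>i<n. (\<Sum>j<m. A $$ (i,j) * x $ j) * cnj (y $ i))"
    using assms by (auto simp: scalar_prod_def lessThan_atLeast0 intro!: sum.cong)
  also have "\<dots> = (\<Sum>j<m. \<Sum>i<n. A $$ (i,j) * x $ j * cnj (y $ i))"
    by (simp add: sum_distrib_right sum.swap[of _ "{..<n}"])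
  also have "\<dots> = (\<Sum>j<m. x $ j * cnj (\<Sum>i<n. cnj (A $$ (i,j)) * y $ i))"
    by (auto simp: sum_distrib_left intro!: sum.cong)
  also have "\<dots> = x \<bullet>c (mat_adjoint A *\<^sub>v y)"
    using assms by (auto simp: scalar_prod_def lessThan_atLeast0 intro!: sum.cong)
  finally show ?thesis .
qed


definition nrm :: "complex vec \<Rightarrow> complex vec" where
  "nrm x = (1 / complex_of_real (sqrt (Re (x \<bullet>c x)))) \<cdot>\<^sub>v x"

lemma cself_real: "Im (x \<bullet>c x) = 0" "Re (x \<bullet>c x) \<ge> 0"
  using conjugate_square_ge_0_vec[of x] by (auto simp: less_eq_complex_def)

lemma cself_pos: assumes "x \<in> carrier_vec n" "x \<noteq> 0\<^sub>v n" shows "Re (x \<bullet>c x) > 0"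
  using conjugate_square_greater_0_vec[OF assms(1)] assms by (auto simp: less_complex_def)

lemma nrm_carrier[simp]: "x \<in> carrier_vec n \<Longrightarrow> nrm x \<in> carrier_vec n"
  unfolding nrm_def by simp

lemma nrm_cprod: assumes "x \<in> carrier_vec n" "y \<in> carrier_vec n"
  shows "nrm x \<bullet>c nrm y = complex_of_real (1 / (sqrt (Re (x \<bullet>c x)) * sqrt (Re (y \<bullet>c y)))) * (x \<bullet>c y)"
  using assms unfolding nrm_def
  by (simp add: conjugate_smult_vec)

lemma nrm_unit: assumes "x \<in> carrier_vec n" "x \<noteq> 0\<^sub>v n"
  shows "nrm x \<bullet>c nrm x = 1"
proof -
  define r where "r = Re (x \<bullet>c x)"
  have p: "r > 0" using cself_pos[OF assms] unfolding r_def .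
  have e: "x \<bullet>c x = complex_of_real r" using cself_real(1)[of x] unfolding r_def by (simp add: complex_eq_iff)
  have "sqrt r * sqrt r = r" using p by simp
  then show ?thesis unfolding nrm_cprod[OF assms(1) assms(1)] e using p
    by (simp flip: of_real_mult)
qed

lemma nrm_nonzero: assumes "x \<in> carrier_vec n" "x \<noteq> 0\<^sub>v n" shows "nrm x \<noteq> 0\<^sub>v n"
  using nrm_unit[OF assms] by auto

lemma nrm_eigen: assumes "A \<in> carrier_mat n n" "x \<in> carrier_vec n" "A *\<^sub>v x = e \<cdot>\<^sub>v x"
  shows "A *\<^sub>v nrm x = e \<cdot>\<^sub>v nrm x"
  using assms unfolding nrm_def by (simp add: mult_mat_vec smult_smult_assoc mult.commute)

lemma nrm_idem: assumes "x \<in> carrier_vec n" "x \<bullet>c x = 1" shows "nrm x = x"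
  using assms unfolding nrm_def by simp

lemma corthogonal_nrm: assumes "set ws \<subseteq> carrier_vec n" "corthogonal ws"
  shows "corthogonal (map nrm ws)"
proof (rule corthogonalI)
  fix i j assume i: "i < length (map nrm ws)" and j: "j < length (map nrm ws)"
  hence i': "i < length ws" and j': "j < length ws" by auto
  have c: "ws ! i \<in> carrier_vec n" "ws ! j \<in> carrier_vec n" using assms i' j' by auto
  have nz: "ws ! k \<noteq> 0\<^sub>v n" if "k < length ws" for k
    using corthogonalD[OF assms(2) that that] by auto
  have pos: "Re (ws ! i \<bullet>c ws ! i) > 0" "Re (ws ! j \<bullet>c ws ! j) > 0"
    using cself_pos[OF c(1) nz[OF i']] cself_pos[OF c(2) nz[OF j']] by auto
  show "(map nrm ws ! i \<bullet>c map nrm ws ! j = 0) = (i \<noteq> j)"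
    using i' j' nrm_cprod[OF c] pos corthogonalD[OF assms(2) i' j'] by auto
qed

lemma corthogonal_inv_unit: assumes W: "W = mat_of_cols n ws" and ws: "set ws \<subseteq> carrier_vec n"
  and u: "\<And>w. w \<in> set ws \<Longrightarrow> w \<bullet>c w = 1"
  shows "corthogonal_inv W = mat_adjoint W"
  unfolding corthogonal_inv_def mat_adjoint_def W
  by (rule arg_cong[of _ _ "mat_of_rows _"], insert ws u, auto simp: vec_inv_def cols_mat_of_cols intro!: map_cong)

lemma adj_four_block_1: assumes "P \<in> carrier_mat m m"
  shows "mat_adjoint (four_block_mat (1\<^sub>m 1) (0\<^sub>m 1 m) (0\<^sub>m m 1) (P :: complex mat))
    = four_block_mat (1\<^sub>m 1) (0\<^sub>m 1 m) (0\<^sub>m m 1) (mat_adjoint P)"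
  by (rule eq_matI, insert assms, auto simp: index_mat_four_block)


lemma unitary_schur:
  assumes "(A::complex mat) \<in> carrier_mat n n"
      and "char_poly A = (\<Prod> (e :: complex) \<leftarrow> es. [:- e, 1:])"
  shows "\<exists>B P. similar_mat_wit A B P (mat_adjoint P) \<and> upper_triangular B \<and> diag_mat B = es"
  using assms
proof (induct es arbitrary: n A)
  case Nil
  with degree_monic_char_poly[of A n]
  have "n = 0" by auto
  with Nil show ?case 
    by (intro exI[of _ A] exI[of _ "1\<^sub>m n"], auto intro: similar_mat_wit_refl simp: diag_mat_def)
next
  case (Cons e es n A)
  let ?n1 = "n - 1"
  from Cons have A: "A \<in> carrier_mat n n" and dim: "dim_row A = n" by auto
  let ?cp = "char_poly A"
  from Cons(3)
  have cp: "?cp = [: -e, 1 :] * (\<Prod>e \<leftarrow> es. [:- e, 1:])" by auto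
  have mon: "monic (\<Prod>e\<leftarrow> es. [:- e, 1:])" by (rule monic_prod_list, auto)
  have deg: "degree ?cp = Suc (degree (\<Prod>e\<leftarrow> es. [:- e, 1:]))" unfolding cp
    by (subst degree_mult_eq, insert mon, auto)
  with degree_monic_char_poly[OF A] have n: "n \<noteq> 0" by auto
  define v0 where "v0 = find_eigenvector A e"
  define b where "b = basis_completion v0"
  define ws0 where "ws0 = gram_schmidt n b"
  define ws where "ws = map nrm ws0"
  define v where "v = nrm v0"
  define W where "W = mat_of_cols n ws"
  define W' where "W' = corthogonal_inv W"
  define A' where "A' = W' * A * W"
  obtain A1 A2 A0 A3 where splitA': "split_block A' 1 1 = (A1,A2,A0,A3)"
    by (cases "split_block A' 1 1", auto)
  have e: "eigenvalue A e" 
    unfolding eigenvalue_root_char_poly[OF A] cp by simp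
  from find_eigenvector[OF A e] have ev: "eigenvector A v0 e" unfolding v0_def .
  from this[unfolded eigenvector_def]
  have v0[simp]: "v0 \<in> carrier_vec n" and v00: "v0 \<noteq> 0\<^sub>v n" using A by auto
  interpret cof_vec_space n "TYPE(complex)" .
  from basis_completion[OF v0 v00, folded b_def]
  have span_b: "span (set b) = carrier_vec n" and dist_b: "distinct b" 
    and indep: "\<not> lin_dep (set b)" and b: "set b \<subseteq> carrier_vec n" and hdb: "hd b = v0" 
    and len_b: "length b = n" by auto
  from hdb len_b n obtain vs where bv: "b = v0 # vs" by (cases b, auto)
  from gram_schmidt_result[OF b dist_b indep refl, folded ws0_def]
  have ws0: "set ws0 \<subseteq> carrier_vec n" "corthogonal ws0" "length ws0 = n" 
    by (auto simp: len_b)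
  from gram_schmidt_hd[OF v0, of vs, folded bv] have hdws0: "hd ws0 = v0" unfolding ws0_def .
  have ws: "set ws \<subseteq> carrier_vec n" "corthogonal ws" "length ws = n"
    using ws0 corthogonal_nrm[OF ws0(1,2)] unfolding ws_def by auto
  have hdws: "hd ws = v" unfolding ws_def v_def using hdws0 ws0(3) n by (cases ws0, auto)
  have v[simp]: "v \<in> carrier_vec n" unfolding v_def by simp
  have v_0: "v \<noteq> 0\<^sub>v n" unfolding v_def using nrm_nonzero[OF v0 v00] .
  have eigen[simp]: "A *\<^sub>v v = e \<cdot>\<^sub>v v" 
    using ev A unfolding eigenvector_def v_def by (intro nrm_eigen[of _ n], auto)
  have unit: "w \<bullet>c w = 1" if "w \<in> set ws" for w
  proof -
    from that obtain w0 where w0: "w0 \<in> set ws0" and w: "w = nrm w0" unfolding ws_def by auto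
    from w0 obtain k where k: "k < length ws0" "w0 = ws0 ! k" by (auto simp: in_set_conv_nth)
    have "w0 \<noteq> 0\<^sub>v n" using corthogonalD[OF ws0(2) k(1) k(1)] k by auto
    thus ?thesis unfolding w using nrm_unit[of w0 n] w0 ws0(1) by auto
  qed
  have W'adj: "W' = mat_adjoint W" unfolding W'_def
    by (rule corthogonal_inv_unit[OF W_def ws(1) unit])
  have orth_W: "corthogonal_mat W" using orthogonal_mat_of_cols ws unfolding W_def.
  have W: "W \<in> carrier_mat n n"
    using ws unfolding W_def using mat_of_cols_carrier(1)[of n ws] by auto
  have W': "W' \<in> carrier_mat n n" unfolding W'_def corthogonal_inv_def using W 
    by (auto simp: mat_of_rows_def)  
  from corthogonal_inv_result[OF orth_W] 
  have W'W: "inverts_mat W' W" unfolding W'_def .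
  hence WW': "inverts_mat W W'" using mat_mult_left_right_inverse[OF W' W] W' W
    unfolding inverts_mat_def by auto
  have A': "A' \<in> carrier_mat n n" using W W' A unfolding A'_def by auto
  have A'A_wit: "similar_mat_wit A' A W' W"
    by (rule similar_mat_witI[of _ _ n], insert W W' A A' W'W WW', auto simp: A'_def
    inverts_mat_def)
  hence A'A: "similar_mat A' A" unfolding similar_mat_def by blast
  from similar_mat_wit_sym[OF A'A_wit] have simAA': "similar_mat_wit A A' W W'" by auto
  let ?f = "(\<lambda> i. if i = 0 then e else 0)"
  have col0: "col A' 0 = vec n ?f"
    unfolding A'_def W'_def W_def
    using corthogonal_col_ev_0[OF A v v_0 eigen n hdws ws].
  from A' n have "dim_row A' = 1 + ?n1" "dim_col A' = 1 + ?n1" by auto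
  from split_block[OF splitA' this] have A2: "A2 \<in> carrier_mat 1 ?n1"
    and A3: "A3 \<in> carrier_mat ?n1 ?n1" 
    and A'block: "A' = four_block_mat A1 A2 A0 A3" by auto
  have A1id: "A1 = mat 1 1 (\<lambda> _. e)"
    using splitA'[unfolded split_block_def Let_def] arg_cong[OF col0, of "\<lambda> v :: complex vec. v $ 0"] A' n
    by (auto simp: col_def)
  have A1: "A1 \<in> carrier_mat 1 1" unfolding A1id by auto
  {
    fix i
    assume "i < ?n1"
    with arg_cong[OF col0, of "\<lambda> v :: complex vec. v $ Suc i"] A'
    have "A' $$ (Suc i, 0) = 0" by auto
  } note A'0 = this
  have A0id: "A0 = 0\<^sub>m ?n1 1"
    using splitA'[unfolded split_block_def Let_def] A'0 A' by auto
  have A0: "A0 \<in> carrier_mat ?n1 1" unfolding A0id by auto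
  from cp char_poly_similar[OF A'A]
  have cp: "char_poly A' = [: -e,1 :] * (\<Prod> e \<leftarrow> es. [:- e, 1:])" by simp
  also have "char_poly A' = char_poly A1 * char_poly A3" 
    unfolding A'block A0id
    by (rule char_poly_four_block_zeros_col[OF A1 A2 A3])
  also have "char_poly A1 = [: -e,1 :]"
    by (simp add: A1id char_poly_defs det_def sign_def)
  finally have cp: "char_poly A3 = (\<Prod> e \<leftarrow> es. [:- e, 1:])"
    by (metis mult_cancel_left pCons_eq_0_iff zero_neq_one)
  from Cons(1)[OF A3 cp] obtain B P' where
   simIH: "similar_mat_wit A3 B P' (mat_adjoint P')" and ut: "upper_triangular B" and diag: "diag_mat B = es" by auto
  define Q' where "Q' = mat_adjoint P'"
  from similar_mat_witD2[OF A3 simIH[folded Q'_def]] 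
  have B: "B \<in> carrier_mat ?n1 ?n1" and P': "P' \<in> carrier_mat ?n1 ?n1" and Q': "Q' \<in> carrier_mat ?n1 ?n1" 
    and PQ': "P' * Q' = 1\<^sub>m ?n1" by auto
  let ?P' = "four_block_mat (1\<^sub>m 1) (0\<^sub>m 1 ?n1) (0\<^sub>m ?n1 1) P'"
  let ?Q' = "four_block_mat (1\<^sub>m 1) (0\<^sub>m 1 ?n1) (0\<^sub>m ?n1 1) Q'"
  define C where "C = four_block_mat A1 (A2 * P') A0 B"
  have A0_eq: "A0 = P' * A0 * 1\<^sub>m 1" unfolding A0id using P' by auto
  have simA'C: "similar_mat_wit A' C ?P' ?Q'" unfolding A'block C_def
    by (rule similar_mat_wit_four_block[OF similar_mat_wit_refl[OF A1] simIH[folded Q'_def] _ A0_eq A1 A3 A0],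
    insert PQ' A2 P' Q', auto)
  have ut1: "upper_triangular A1" unfolding A1id by auto
  have ut: "upper_triangular C" unfolding C_def A0id
    by (intro upper_triangular_four_block[OF _ B ut1 ut], auto simp: A1id)
  from A1id have diagA1: "diag_mat A1 = [e]" unfolding diag_mat_def by auto
  from diag_four_block_mat[OF A1 B] have diag: "diag_mat C = e # es" unfolding diag diagA1 C_def by simp
  have P'c: "?P' \<in> carrier_mat n n" using P' n by auto
  have adjP: "mat_adjoint (W * ?P') = ?Q' * W'"
    unfolding adj_mult[OF W P'c] adj_four_block_1[OF P'] Q'_def W'adj ..
  from ut similar_mat_wit_trans[OF simAA' simA'C] diag adjP
  show ?case by metis
qed


lemma order_prod_linear: "Polynomial.order r (\<Prod> (e :: complex) \<leftarrow> es. [:- e, 1:]) = count_list es r"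
proof (induct es)
  case (Cons e es)
  have "Polynomial.order r (\<Prod> e \<leftarrow> e # es. [:- e, 1:]) = Polynomial.order r ([:- e, 1:] * (\<Prod> e \<leftarrow> es. [:- e, 1:]))"
    by simp
  also have "\<dots> = Polynomial.order r [:- e, 1:] + Polynomial.order r (\<Prod> e \<leftarrow> es. [:- e, 1:])"
  proof (rule order_mult)
    have "(\<Prod> e \<leftarrow> es. [:- e, 1:] :: complex poly) \<noteq> 0" unfolding prod_list_zero_iff by auto
    thus "[:- e, 1:] * (\<Prod> e \<leftarrow> es. [:- e, 1:]) \<noteq> 0" by (intro no_zero_divisors) simp_all
  qed
  finally show ?case using Cons by (auto simp: order_linear')
qed simp

lemma num_neg_count: assumes A: "A \<in> carrier_mat n n" and cp: "char_poly A = (\<Prod> (e :: complex) \<leftarrow> es. [:- e, 1:])"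
  shows "num_neg_eigenvalues A = length (filter (\<lambda>r. r \<in> \<real> \<and> Re r < 0) es)"
proof -
  let ?Q = "\<lambda>r. r \<in> \<real> \<and> Re r < 0"
  have S: "{r. eigenvalue A r \<and> r \<in> \<real> \<and> Re r < 0} = set es \<inter> {r. ?Q r}"
    unfolding eigenvalue_root_char_poly[OF A] cp by (auto simp: poly_prod_list_zero_iff)
  have "num_neg_eigenvalues A = (\<Sum>r \<in> set es \<inter> {r. ?Q r}. count_list es r)"
    unfolding num_neg_eigenvalues_def S cp order_prod_linear ..
  also have "\<dots> = (\<Sum>r \<in> set es \<inter> {r. ?Q r}. count_list (filter ?Q es) r)"
    by (rule sum.cong, auto simp: count_list_eq_length_filter filter_filter intro!: arg_cong[of _ _ length] filter_cong)
  also have "\<dots> = length (filter ?Q es)"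
    by (rule sum_count_set, auto)
  finally show ?thesis .
qed

lemma hermitian_diag:
  assumes A: "(A :: complex mat) \<in> carrier_mat n n" and herm: "mat_adjoint A = A"
  shows "\<exists>U d. U \<in> carrier_mat n n \<and> U * mat_adjoint U = 1\<^sub>m n \<and>
     num_neg_eigenvalues A = card {i. i < n \<and> d i < (0::real)} \<and>
     (\<forall>x \<in> carrier_vec n. (A *\<^sub>v (U *\<^sub>v x)) \<bullet>c (U *\<^sub>v x) = (\<Sum>i<n. complex_of_real (d i) * (x $ i * cnj (x $ i))))"
proof -
  obtain es where cp: "char_poly A = (\<Prod> e \<leftarrow> es. [:- e, 1:])" and len: "length es = n"
    using char_poly_factorized[OF A] by auto
  obtain B P where sim: "similar_mat_wit A B P (mat_adjoint P)" and ut: "upper_triangular B"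
    and diag: "diag_mat B = es"
    using unitary_schur[OF A cp] by auto
  note w = similar_mat_witD2[OF A sim]
  have PQ: "P * mat_adjoint P = 1\<^sub>m n" and QP: "mat_adjoint P * P = 1\<^sub>m n"
    and AB: "A = P * B * mat_adjoint P" and B: "B \<in> carrier_mat n n" and P: "P \<in> carrier_mat n n"
    using w(1,2,3,5,6) .
  have Q: "mat_adjoint P \<in> carrier_mat n n" using P by simp
  have r1: "mat_adjoint P * (P * Y) = Y" if "Y \<in> carrier_mat n n" for Y
    using assoc_mult_mat[OF Q P that] QP that by simp
  have "mat_adjoint P * A * P = B"
    unfolding AB using P B Q by (simp add: assoc_mult_mat[of _ n n _ n _ n] r1 QP)
  hence BA: "B = mat_adjoint P * A * P" ..
  have "mat_adjoint (mat_adjoint P * A * P) = mat_adjoint P * mat_adjoint (mat_adjoint P * A)"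
    by (rule adj_mult[of _ n n], insert P A Q, auto)
  also have "mat_adjoint (mat_adjoint P * A) = A * P"
    using adj_mult[OF Q A] herm by simp
  also have "mat_adjoint P * (A * P) = mat_adjoint P * A * P"
    using assoc_mult_mat[OF Q A P] by simp
  finally have hB: "mat_adjoint B = B" unfolding BA .
  have Bij: "B $$ (i,j) = 0" if "i < n" "j < n" "i \<noteq> j" for i j
  proof (cases "j < i")
    case True thus ?thesis using ut that B unfolding upper_triangular_def by auto
  next
    case False
    hence "B $$ (j,i) = 0" using ut that B unfolding upper_triangular_def by auto
    moreover have "B $$ (i,j) = cnj (B $$ (j,i))"
      using arg_cong[OF hB, of "\<lambda>M. M $$ (i,j)"] that B by auto
    ultimately show ?thesis by simp
  qed
  define d where "d i = Re (B $$ (i,i))" for i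
  have Bii: "B $$ (i,i) = complex_of_real (d i)" if "i < n" for i
  proof -
    have "B $$ (i,i) = cnj (B $$ (i,i))"
      using arg_cong[OF hB, of "\<lambda>M. M $$ (i,i)"] that B by auto
    thus ?thesis unfolding d_def by (metis Reals_cnj_iff complex_is_Real_iff of_real_Re)
  qed
  have es_nth: "es ! i = complex_of_real (d i)" if "i < n" for i
    using diag[symmetric] that B Bii unfolding diag_mat_def by auto
  have "num_neg_eigenvalues A = length (filter (\<lambda>r. r \<in> \<real> \<and> Re r < 0) es)"
    by (rule num_neg_count[OF A cp])
  also have "\<dots> = card {i. i < n \<and> d i < 0}"
    unfolding length_filter_conv_card len
    by (rule arg_cong[of _ _ card], auto simp: es_nth)
  finally have nn: "num_neg_eigenvalues A = card {i. i < n \<and> d i < 0}" .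
  have qf: "(A *\<^sub>v (P *\<^sub>v x)) \<bullet>c (P *\<^sub>v x) = (\<Sum>i<n. complex_of_real (d i) * (x $ i * cnj (x $ i)))"
    if x: "x \<in> carrier_vec n" for x
  proof -
    have "A *\<^sub>v (P *\<^sub>v x) = P *\<^sub>v (B *\<^sub>v ((mat_adjoint P * P) *\<^sub>v x))"
    proof -
      have cv: "mat_adjoint P *\<^sub>v (P *\<^sub>v x) \<in> carrier_vec n" using mult_mat_vec_carrier[OF Q mult_mat_vec_carrier[OF P x]] .
      show ?thesis
      unfolding AB using P B Q x by (simp add: assoc_mult_mat_vec[OF mult_carrier_mat[OF P B] Q] assoc_mult_mat_vec[OF P B cv] assoc_mult_mat_vec[OF Q P])
    qed
    also have "\<dots> = P *\<^sub>v (B *\<^sub>v x)" unfolding QP using x by simp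
    finally have "(A *\<^sub>v (P *\<^sub>v x)) \<bullet>c (P *\<^sub>v x) = (B *\<^sub>v x) \<bullet>c (mat_adjoint P *\<^sub>v (P *\<^sub>v x))"
      using adj_mult_vec[OF P, of "B *\<^sub>v x" "P *\<^sub>v x"] B x P by auto
    also have "mat_adjoint P *\<^sub>v (P *\<^sub>v x) = x"
      using assoc_mult_mat_vec[OF Q P x, symmetric] QP x by simp
    also have "(B *\<^sub>v x) \<bullet>c x = (\<Sum>i<n. (\<Sum>j<n. B $$ (i,j) * x $ j) * cnj (x $ i))"
      using B x by (auto simp: scalar_prod_def lessThan_atLeast0 intro!: sum.cong)
    also have "\<dots> = (\<Sum>i<n. B $$ (i,i) * x $ i * cnj (x $ i))"
    proof (rule sum.cong[OF refl])
      fix i assume i: "i \<in> {..<n}"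
      have "(\<Sum>j<n. B $$ (i,j) * x $ j) = B $$ (i,i) * x $ i"
        by (rule trans[OF sum.remove[of _ i]], insert i Bij, auto intro!: sum.neutral)
      thus "(\<Sum>j<n. B $$ (i,j) * x $ j) * cnj (x $ i) = B $$ (i,i) * x $ i * cnj (x $ i)" by simp
    qed
    also have "\<dots> = (\<Sum>i<n. complex_of_real (d i) * (x $ i * cnj (x $ i)))"
      by (rule sum.cong, auto simp: Bii)
    finally show ?thesis .
  qed
  show ?thesis using P PQ nn qf by blast
qed


lemma Re_qf_diag: fixes x :: "complex vec" shows "Re (\<Sum>i<n. complex_of_real (d i) * (x $ i * cnj (x $ i))) = (\<Sum>i<n. d i * (cmod (x $ i))^2)"
  by (simp add: Re_sum complex_mult_cnj cmod_power2 flip: of_real_power)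

lemma neg_ge_1: assumes A: "(A :: complex mat) \<in> carrier_mat n n" and herm: "mat_adjoint A = A"
  and v: "v \<in> carrier_vec n" and neg: "Re ((A *\<^sub>v v) \<bullet>c v) < 0"
  shows "num_neg_eigenvalues A \<ge> 1"
proof (rule ccontr)
  assume nt: "\<not> ?thesis"
  from hermitian_diag[OF A herm] obtain U d where U: "U \<in> carrier_mat n n" and UU: "U * mat_adjoint U = 1\<^sub>m n"
    and nn: "num_neg_eigenvalues A = card {i. i < n \<and> d i < 0}"
    and qf: "\<And>x. x \<in> carrier_vec n \<Longrightarrow> (A *\<^sub>v (U *\<^sub>v x)) \<bullet>c (U *\<^sub>v x) = (\<Sum>i<n. complex_of_real (d i) * (x $ i * cnj (x $ i)))"
    by blast
  have c0: "card {i. i < n \<and> d i < 0} = 0" using nn nt by linarith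
  have fin: "finite {i. i < n \<and> d i < 0}" by simp
  have d: "d i \<ge> 0" if "i < n" for i
  proof (rule ccontr)
    assume "\<not> d i \<ge> 0"
    hence "i \<in> {i. i < n \<and> d i < 0}" using that by auto
    thus False using c0 fin by (auto simp: card_eq_0_iff)
  qed
  define x where "x = mat_adjoint U *\<^sub>v v"
  have x: "x \<in> carrier_vec n" unfolding x_def using mult_mat_vec_carrier[OF adj_carrier[OF U] v] .
  have "U *\<^sub>v x = (U * mat_adjoint U) *\<^sub>v v" unfolding x_def using assoc_mult_mat_vec[OF U adj_carrier[OF U] v] by simp
  hence Ux: "U *\<^sub>v x = v" using UU v by simp
  have "Re ((A *\<^sub>v v) \<bullet>c v) = (\<Sum>i<n. d i * (cmod (x $ i))^2)"
    using qf[OF x] unfolding Ux Re_qf_diag[symmetric] by simp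
  also have "\<dots> \<ge> 0" by (rule sum_nonneg, insert d, auto)
  finally show False using neg by simp
qed

lemma neg_le_1: assumes A: "(A :: complex mat) \<in> carrier_mat n n" and herm: "mat_adjoint A = A"
  and w: "w \<in> carrier_vec n" and pos: "\<And>v. v \<in> carrier_vec n \<Longrightarrow> v \<bullet>c w = 0 \<Longrightarrow> Re ((A *\<^sub>v v) \<bullet>c v) \<ge> 0"
  shows "num_neg_eigenvalues A \<le> 1"
proof (rule ccontr)
  assume nt: "\<not> ?thesis"
  from hermitian_diag[OF A herm] obtain U d where U: "U \<in> carrier_mat n n" and UU: "U * mat_adjoint U = 1\<^sub>m n"
    and nn: "num_neg_eigenvalues A = card {i. i < n \<and> d i < 0}"
    and qf: "\<And>x. x \<in> carrier_vec n \<Longrightarrow> (A *\<^sub>v (U *\<^sub>v x)) \<bullet>c (U *\<^sub>v x) = (\<Sum>i<n. complex_of_real (d i) * (x $ i * cnj (x $ i)))"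
    by blast
  have "card {i. i < n \<and> d i < 0} \<ge> 2" using nn nt by simp
  then obtain i j where ij: "i < n" "j < n" "i \<noteq> j" "d i < 0" "d j < 0"
  proof -
    obtain S where "S \<subseteq> {i. i < n \<and> d i < 0}" "card S = 2"
      using \<open>card _ \<ge> 2\<close> by (meson obtain_subset_with_card_n)
    then obtain i j where "S = {i,j}" "i \<noteq> j" by (auto simp: card_2_iff)
    thus ?thesis using that \<open>S \<subseteq> _\<close> by auto
  qed
  define u where "u = mat_adjoint U *\<^sub>v w"
  have u: "u \<in> carrier_vec n" unfolding u_def using mult_mat_vec_carrier[OF adj_carrier[OF U] w] .
  define a where "a = (if u $ i = 0 \<and> u $ j = 0 then 1 else cnj (u $ j))"
  define b where "b = (if u $ i = 0 \<and> u $ j = 0 then 0 else - cnj (u $ i))"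
  have ab: "a \<noteq> 0 \<or> b \<noteq> 0" unfolding a_def b_def by auto
  have abu: "a * cnj (u $ i) + b * cnj (u $ j) = 0" unfolding a_def b_def by auto
  define x where "x = vec n (\<lambda>k. if k = i then a else if k = j then b else 0)"
  have x: "x \<in> carrier_vec n" unfolding x_def by simp
  have two: "(\<Sum>k<n. f k) = f i + f j" if "\<And>k. k < n \<Longrightarrow> k \<noteq> i \<Longrightarrow> k \<noteq> j \<Longrightarrow> f k = 0" for f :: "nat \<Rightarrow> 'z :: comm_monoid_add"
  proof -
    have "(\<Sum>k<n. f k) = (\<Sum>k\<in>{i,j}. f k)"
      by (rule sum.mono_neutral_right, insert ij that, auto)
    thus ?thesis using ij by simp
  qed
  have "(U *\<^sub>v x) \<bullet>c w = x \<bullet>c u" unfolding u_def by (rule adj_mult_vec[OF U x w])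
  also have "\<dots> = (\<Sum>k<n. x $ k * cnj (u $ k))"
    using x u by (auto simp: scalar_prod_def lessThan_atLeast0)
  also have "\<dots> = x $ i * cnj (u $ i) + x $ j * cnj (u $ j)"
    by (rule two, auto simp: x_def)
  also have "\<dots> = 0" using ij abu unfolding x_def by auto
  finally have "Re ((A *\<^sub>v (U *\<^sub>v x)) \<bullet>c (U *\<^sub>v x)) \<ge> 0" using pos[of "U *\<^sub>v x"] U x by auto
  also have "Re ((A *\<^sub>v (U *\<^sub>v x)) \<bullet>c (U *\<^sub>v x)) = (\<Sum>k<n. d k * (cmod (x $ k))^2)"
    using qf[OF x] unfolding Re_qf_diag[symmetric] by simp
  also have "\<dots> = d i * (cmod a)^2 + d j * (cmod b)^2"
    using ij(1,2) ij(3) ij(3)[symmetric] by (subst two) (auto simp: x_def)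
  also have "\<dots> < 0"
  proof -
    have "d i * (cmod a)^2 \<le> 0" "d j * (cmod b)^2 \<le> 0" using ij by (auto simp: mult_nonpos_nonneg)
    moreover have "d i * (cmod a)^2 < 0 \<or> d j * (cmod b)^2 < 0" using ab ij by (auto simp: mult_neg_pos)
    ultimately show ?thesis by linarith
  qed
  finally show False by simp
qed



definition gg :: "nat \<Rightarrow> complex \<Rightarrow> complex" where "gg n z = z ^ n / (2 * z - 1)"

lemma kernel_id:
  fixes z w :: complex
  assumes z: "2 * z - 1 \<noteq> 0" and w: "2 * w - 1 \<noteq> 0" and zw: "1 - z * cnj w \<noteq> 0"
  shows "(1 - (z ^ n * (2 - z) / (2 * z - 1)) * cnj (w ^ n * (2 - w) / (2 * w - 1))) / (1 - z * cnj w)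
    = (\<Sum>k<n. z ^ k * cnj w ^ k) - 3 * gg n z * cnj (gg n w)"
proof -
  define u where "u = z * cnj w"
  have w': "2 * cnj w - 1 \<noteq> 0"
  proof
    assume "2 * cnj w - 1 = 0"
    hence "cnj (2 * cnj w - 1) = 0" by simp
    thus False using w by simp
  qed
  have geo: "(\<Sum>k<n. z ^ k * cnj w ^ k) = (1 - u ^ n) / (1 - u)"
    using one_diff_power_eq[of u n] zw unfolding u_def by (simp add: power_mult_distrib field_simps)
  define D where "D = (2 * z - 1) * (2 * cnj w - 1)"
  have Dnz: "D \<noteq> 0" unfolding D_def using z w' by simp
  have un: "1 - u \<noteq> 0" using zw unfolding u_def .
  have f1: "(z ^ n * (2 - z) / (2 * z - 1)) * cnj (w ^ n * (2 - w) / (2 * w - 1)) = u ^ n * ((2 - z) * (2 - cnj w)) / D"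
    unfolding u_def D_def by (simp add: power_mult_distrib)
  have g1: "gg n z * cnj (gg n w) = u ^ n / D"
    unfolding u_def D_def gg_def by (simp add: power_mult_distrib)
  have e: "(2 - z) * (2 - cnj w) = D + 3 * (1 - u)" unfolding D_def u_def by (simp add: algebra_simps)
  have "(1 - u ^ n * (D + 3 * (1 - u)) / D) / (1 - u) = (1 - u ^ n) / (1 - u) - 3 * (u ^ n / D)"
    using Dnz un by (simp add: field_simps)
  thus ?thesis unfolding f1 e geo mult.assoc g1 u_def[symmetric] .
qed

lemma pick_index: "i < m \<Longrightarrow> j < m \<Longrightarrow> pick_matrix f m z $$ (i,j) = (1 - f (z i) * cnj (f (z j))) / (1 - z i * cnj (z j))"
  unfolding pick_matrix_def by simp

lemma pick_dims[simp]: "dim_row (pick_matrix f m z) = m" "dim_col (pick_matrix f m z) = m"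
  unfolding pick_matrix_def by simp_all

lemma pick_carrier[simp]: "pick_matrix f m z \<in> carrier_mat m m"
  unfolding pick_matrix_def by simp

lemma pick_herm: "mat_adjoint (pick_matrix f m z) = pick_matrix f m z"
  by (rule eq_matI, auto simp: pick_index pick_matrix_def) (simp_all add: mult.commute)

lemma bilin: fixes a v :: "nat \<Rightarrow> complex"
  shows "(\<Sum>i<m. \<Sum>j<m. a i * cnj (a j) * v j * cnj (v i)) = (\<Sum>i<m. a i * cnj (v i)) * cnj (\<Sum>i<m. a i * cnj (v i))"
  by (simp add: cnj_sum sum_product mult_ac)

lemma pick_qf:
  fixes f :: "complex \<Rightarrow> complex"
  assumes f: "\<And>z. f z = z ^ n * (2 - z) / (2 * z - 1)"
  and z: "\<And>i. i < m \<Longrightarrow> z i \<in> ball 0 1 - {1/2}"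
  and v: "v \<in> carrier_vec m"
  shows "(pick_matrix f m z *\<^sub>v v) \<bullet>c v = (\<Sum>k<n. (\<Sum>i<m. z i ^ k * cnj (v $ i)) * cnj (\<Sum>i<m. z i ^ k * cnj (v $ i)))
     - 3 * ((\<Sum>i<m. gg n (z i) * cnj (v $ i)) * cnj (\<Sum>i<m. gg n (z i) * cnj (v $ i)))"
proof -
  have ent: "pick_matrix f m z $$ (i,j) = (\<Sum>k<n. z i ^ k * cnj (z j) ^ k) - 3 * gg n (z i) * cnj (gg n (z j))"
    if "i < m" "j < m" for i j
  proof -
    have zi: "2 * z i - 1 \<noteq> 0" "2 * z j - 1 \<noteq> 0" using z[OF that(1)] z[OF that(2)] by (auto simp: field_simps)
    have "cmod (z i) * cmod (z j) \<le> cmod (z j)" using z[OF that(1)]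
      by (intro mult_left_le_one_le) auto
    hence "norm (z i * cnj (z j)) < 1" using z[OF that(2)] by (simp add: norm_mult)
    hence "1 - z i * cnj (z j) \<noteq> 0" by auto
    thus ?thesis using kernel_id[OF zi] that unfolding pick_index[OF that] f by simp
  qed
  have "(pick_matrix f m z *\<^sub>v v) \<bullet>c v = (\<Sum>i<m. (\<Sum>j<m. pick_matrix f m z $$ (i,j) * v $ j) * cnj (v $ i))"
    using v by (auto simp: scalar_prod_def lessThan_atLeast0 intro!: sum.cong)
  also have "\<dots> = (\<Sum>i<m. \<Sum>j<m. ((\<Sum>k<n. z i ^ k * cnj (z j ^ k)) - 3 * (gg n (z i) * cnj (gg n (z j)))) * v $ j * cnj (v $ i))"
    by (auto simp: ent sum_distrib_right intro!: sum.cong)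
  also have "\<dots> = (\<Sum>k<n. \<Sum>i<m. \<Sum>j<m. z i ^ k * cnj (z j ^ k) * v $ j * cnj (v $ i))
      - 3 * (\<Sum>i<m. \<Sum>j<m. gg n (z i) * cnj (gg n (z j)) * v $ j * cnj (v $ i))"
    by (simp add: algebra_simps sum_subtractf sum_distrib_left sum_distrib_right sum.swap[of _ "{..<n}"])
  also have "\<dots> = (\<Sum>k<n. (\<Sum>i<m. z i ^ k * cnj (v $ i)) * cnj (\<Sum>i<m. z i ^ k * cnj (v $ i)))
     - 3 * ((\<Sum>i<m. gg n (z i) * cnj (v $ i)) * cnj (\<Sum>i<m. gg n (z i) * cnj (v $ i)))"
    by (simp only: bilin)
  finally show ?thesis .
qed


lemma lagrange_coeff:
  fixes z :: "nat \<Rightarrow> complex" and p :: "complex poly"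
  assumes inj: "inj_on z {..<m}" and deg: "degree p < m"
  shows "(\<Sum>i<m. poly p (z i) / (\<Prod>j\<in>{..<m}-{i}. (z i - z j))) = coeff p (m - 1)"
proof -
  define D where "D i = (\<Prod>j\<in>{..<m}-{i}. (z i - z j))" for i
  define B where "B i = (\<Prod>j\<in>{..<m}-{i}. [:- z j, 1:])" for i
  define L where "L = (\<Sum>i<m. Polynomial.smult (poly p (z i) / D i) (B i))"
  have Bdeg: "degree (B i) = m - 1 \<and> coeff (B i) (m - 1) = 1" if "i < m" for i
  proof -
    have c: "card ({..<m}-{i}) = m - 1" using that by simp
    have h: "0 \<notin> (degree \<circ> (\<lambda>j. [:- z j, 1:])) ` ({..<m}-{i})" by auto
    have "degree (B i) = sum (degree \<circ> (\<lambda>j. [:- z j, 1:])) ({..<m}-{i}) \<and>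
       coeff (B i) (sum (degree \<circ> (\<lambda>j. [:- z j, 1:])) ({..<m}-{i})) = 1"
      unfolding B_def by (rule degree_prod_sum_monic[OF _ h], auto)
    moreover have "sum (degree \<circ> (\<lambda>j. [:- z j, 1:])) ({..<m}-{i}) = m - 1" using c by simp
    ultimately show ?thesis by simp
  qed
  have Dnz: "D i \<noteq> 0" if "i < m" for i
    unfolding D_def using inj that by (auto simp: inj_on_def)
  have polyB: "poly (B i) (z k) = (if k = i then D i else 0)" if "i < m" "k < m" for i k
  proof (cases "k = i")
    case True thus ?thesis unfolding B_def D_def poly_prod by simp
  next
    case False
    hence "k \<in> {..<m}-{i}" using that by auto
    thus ?thesis using False unfolding B_def poly_prod by (auto intro!: prod_zero)
  qed
  have polyL: "poly L (z k) = poly p (z k)" if k: "k < m" for k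
  proof -
    have "poly L (z k) = (\<Sum>i<m. poly p (z i) / D i * poly (B i) (z k))"
      unfolding L_def poly_sum by simp
    also have "\<dots> = (\<Sum>i<m. if i = k then poly p (z k) else 0)"
      by (rule sum.cong, insert k Dnz, auto simp: polyB)
    also have "\<dots> = poly p (z k)" using k by simp
    finally show ?thesis .
  qed
  have degL: "degree L \<le> m - 1"
    unfolding L_def
    by (rule degree_sum_le, simp, rule order.trans[OF degree_smult_le], insert Bdeg, auto)
  have Lp: "L = p"
  proof (rule ccontr)
    assume ne: "L \<noteq> p"
    hence q: "L - p \<noteq> 0" by simp
    have "degree (L - p) \<le> m - 1"
      using degree_diff_le[of L "m - 1" p] degL deg by auto
    moreover have "card (z ` {..<m}) \<le> card {x. poly (L - p) x = 0}"
      by (rule card_mono, rule poly_roots_finite[OF q], auto simp: polyL)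
    moreover have "card (z ` {..<m}) = m" using card_image[OF inj] by simp
    moreover note card_poly_roots_bound[OF q]
    ultimately show False using deg by linarith
  qed
  have "coeff L (m - 1) = (\<Sum>i<m. poly p (z i) / D i * coeff (B i) (m - 1))"
    unfolding L_def coeff_sum by simp
  also have "\<dots> = (\<Sum>i<m. poly p (z i) / D i)"
    by (rule sum.cong, insert Bdeg, auto)
  finally show ?thesis unfolding Lp D_def by simp
qed

lemma interp_top:
  fixes z :: "nat \<Rightarrow> complex"
  assumes z: "\<And>i. i < Suc n \<Longrightarrow> z i \<noteq> 1/2"
  shows "\<exists>r. degree r < Suc n \<and> coeff r n \<noteq> 0 \<and> (\<forall>i < Suc n. poly r (z i) = gg n (z i))"
proof -
  define a :: complex where "a = 1/2"
  define \<omega> where "\<omega> = (\<Prod>j<Suc n. [:- z j, 1:])"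
  define c where "c = poly \<omega> a"
  have c: "c \<noteq> 0" unfolding c_def \<omega>_def poly_prod a_def using z by auto
  have om: "degree \<omega> = Suc n \<and> coeff \<omega> (Suc n) = 1"
    using degree_prod_monic[of "Suc n" "\<lambda>j. [:- z j, 1:]"] unfolding \<omega>_def by (simp add: lessThan_atLeast0)
  have omz: "poly \<omega> (z i) = 0" if "i < Suc n" for i
    unfolding \<omega>_def poly_prod by (rule prod_zero, simp, rule bexI[of _ i], insert that, auto)
  define N where "N = monom c n - Polynomial.smult (a ^ n) \<omega>"
  have Na: "poly N a = 0" unfolding N_def c_def by (simp add: poly_monom)
  define R where "R = synthetic_div N a"
  have NR: "N = [:- a, 1:] * R"
    using synthetic_div_correct'[of a N] Na unfolding R_def by simp
  have degN: "degree N \<le> Suc n"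
    unfolding N_def using om
    by (intro degree_diff_le, auto intro: order.trans[OF degree_monom_le] order.trans[OF degree_smult_le])
  have degR: "degree R \<le> n" unfolding R_def degree_synthetic_div using degN by simp
  have "coeff N (Suc n) = coeff R n"
    unfolding NR using degR by (simp add: coeff_eq_0)
  moreover have "coeff N (Suc n) = - (a ^ n)" unfolding N_def using om by (simp add: coeff_monom)
  ultimately have cR: "coeff R n = - (a ^ n)" by simp
  define r where "r = Polynomial.smult (1 / (2 * c)) R"
  have "degree r < Suc n" unfolding r_def using degR order.trans[OF degree_smult_le] by (simp add: le_imp_less_Suc)
  moreover have "coeff r n \<noteq> 0" unfolding r_def using cR c a_def by simp
  moreover have "poly r (z i) = gg n (z i)" if i: "i < Suc n" for i
  proof -
    have zi: "z i - a \<noteq> 0" using z[OF i] unfolding a_def by simp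
    have "poly N (z i) = c * z i ^ n" unfolding N_def using omz[OF i] by (simp add: poly_monom)
    also have "poly N (z i) = (z i - a) * poly R (z i)" unfolding NR by (simp add: algebra_simps)
    finally have "poly R (z i) = c * z i ^ n / (z i - a)" using zi by (simp add: field_simps)
    thus ?thesis unfolding r_def gg_def a_def using c by (simp add: field_simps)
  qed
  ultimately show ?thesis by blast
qed


lemma Re_mult_cnj: "Re (x * cnj x) = (cmod x)^2"
  by (simp add: complex_mult_cnj cmod_power2 flip: of_real_power)

lemma Im_mult_cnj: "Im (x * cnj x) = 0"
  by (simp add: complex_mult_cnj flip: of_real_power)

lemma univ_bound:
  fixes f :: "complex \<Rightarrow> complex"
  assumes f: "\<And>z. f z = z ^ n * (2 - z) / (2 * z - 1)"
  and z: "\<And>i. i < m \<Longrightarrow> z i \<in> ball 0 1 - {1/2}"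
  shows "num_neg_eigenvalues (pick_matrix f m z) \<le> 1"
proof (rule neg_le_1[OF pick_carrier pick_herm, of "vec m (\<lambda>i. gg n (z i))"])
  fix v :: "complex vec" assume v: "v \<in> carrier_vec m" and vw: "v \<bullet>c vec m (\<lambda>i. gg n (z i)) = 0"
  have "(\<Sum>i<m. gg n (z i) * cnj (v $ i)) = cnj (v \<bullet>c vec m (\<lambda>i. gg n (z i)))"
    using v by (simp add: scalar_prod_def cnj_sum lessThan_atLeast0 mult.commute)
  hence G: "(\<Sum>i<m. gg n (z i) * cnj (v $ i)) = 0" using vw by simp
  from pick_qf[where z=z and m=m and v=v, OF f z v]
  have q: "(pick_matrix f m z *\<^sub>v v) \<bullet>c v = (\<Sum>k<n. (\<Sum>i<m. z i ^ k * cnj (v $ i)) * cnj (\<Sum>i<m. z i ^ k * cnj (v $ i))) - 3 * (0 * cnj 0)"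
    unfolding G .
  have "Re ((pick_matrix f m z *\<^sub>v v) \<bullet>c v) = (\<Sum>k<n. (cmod (\<Sum>i<m. z i ^ k * cnj (v $ i)))^2)"
    by (simp only: q complex_cnj_zero mult_zero_left mult_zero_right diff_zero Re_sum Re_mult_cnj)
  also have "\<dots> \<ge> 0" by (rule sum_nonneg) simp
  finally show "Re ((pick_matrix f m z *\<^sub>v v) \<bullet>c v) \<ge> 0" .
qed simp

lemma part3:
  fixes f :: "complex \<Rightarrow> complex"
  assumes f: "\<And>z. f z = z ^ n * (2 - z) / (2 * z - 1)"
  and inj: "inj_on z {..<Suc n}"
  and z: "\<And>i. i < Suc n \<Longrightarrow> z i \<in> ball 0 1 - {1/2}"
  shows "num_neg_eigenvalues (pick_matrix f (Suc n) z) = 1"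
proof -
  define m where "m = Suc n"
  define D where "D i = (\<Prod>j\<in>{..<m}-{i}. (z i - z j))" for i
  define v where "v = vec m (\<lambda>i. cnj (1 / D i))"
  have v: "v \<in> carrier_vec m" unfolding v_def by simp
  have cv: "cnj (v $ i) = 1 / D i" if "i < m" for i unfolding v_def using that by simp
  have M: "(\<Sum>i<m. z i ^ k * cnj (v $ i)) = 0" if k: "k < n" for k
  proof -
    have "(\<Sum>i<m. z i ^ k * cnj (v $ i)) = (\<Sum>i<m. poly (monom 1 k) (z i) / D i)"
      by (rule sum.cong, auto simp: cv poly_monom)
    also have "\<dots> = coeff (monom 1 k) (m - 1)"
      unfolding D_def by (rule lagrange_coeff[OF inj[folded m_def]], insert k, auto simp: m_def degree_monom_eq)
    also have "\<dots> = 0" using k by (simp add: m_def coeff_monom)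
    finally show ?thesis .
  qed
  obtain r where r: "degree r < Suc n" "coeff r n \<noteq> 0" "\<And>i. i < Suc n \<Longrightarrow> poly r (z i) = gg n (z i)"
    using interp_top[of n z] z by auto
  have G: "(\<Sum>i<m. gg n (z i) * cnj (v $ i)) = coeff r n"
  proof -
    have "(\<Sum>i<m. gg n (z i) * cnj (v $ i)) = (\<Sum>i<m. poly r (z i) / D i)"
      by (rule sum.cong, auto simp: cv r(3) m_def)
    also have "\<dots> = coeff r (m - 1)"
      unfolding D_def by (rule lagrange_coeff[OF inj[folded m_def]], insert r, auto simp: m_def)
    finally show ?thesis by (simp add: m_def)
  qed
  have Msum: "(\<Sum>k<n. (\<Sum>i<m. z i ^ k * cnj (v $ i)) * cnj (\<Sum>i<m. z i ^ k * cnj (v $ i))) = 0"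
    by (rule sum.neutral) (simp add: M)
  from pick_qf[where z=z and m=m and v=v, OF f z[folded m_def] v]
  have q: "(pick_matrix f m z *\<^sub>v v) \<bullet>c v = 0 - 3 * (coeff r n * cnj (coeff r n))"
    unfolding G Msum .
  have "Re ((pick_matrix f m z *\<^sub>v v) \<bullet>c v) = - 3 * (cmod (coeff r n))^2"
  proof -
    have "Re (0 - 3 * (coeff r n * cnj (coeff r n))) = - 3 * Re (coeff r n * cnj (coeff r n))" by simp
    thus ?thesis unfolding q Re_mult_cnj .
  qed
  also have "\<dots> < 0" using r(2) by simp
  finally have neg: "Re ((pick_matrix f m z *\<^sub>v v) \<bullet>c v) < 0" .
  have "num_neg_eigenvalues (pick_matrix f m z) \<ge> 1"
    by (rule neg_ge_1[OF pick_carrier pick_herm v neg])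
  moreover have "num_neg_eigenvalues (pick_matrix f m z) \<le> 1"
    by (rule univ_bound[OF f z[folded m_def]])
  ultimately show ?thesis unfolding m_def by simp
qed



lemma omega_coeff:
  fixes z :: "nat \<Rightarrow> complex" and \<delta> :: real
  assumes d: "0 \<le> \<delta>" "\<delta> \<le> 1" and zb: "\<And>j. j < m \<Longrightarrow> cmod (z j) \<le> \<delta>"
  shows "coeff (\<Prod>j<m. [:- z j, 1:]) m = 1 \<and> (\<forall>k>m. coeff (\<Prod>j<m. [:- z j, 1:]) k = 0)
     \<and> (\<forall>k<m. cmod (coeff (\<Prod>j<m. [:- z j, 1:]) k) \<le> 2 ^ m * \<delta>)"
  using zb
proof (induct m)
  case 0
  show ?case by (auto simp: coeff_eq_0)
next
  case (Suc m)
  define q where "q = (\<Prod>j<m. [:- z j, 1:])"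
  define c where "c = z m"
  have IH: "coeff q m = 1" "\<And>k. k > m \<Longrightarrow> coeff q k = 0" "\<And>k. k < m \<Longrightarrow> cmod (coeff q k) \<le> 2 ^ m * \<delta>"
    using Suc unfolding q_def by auto
  have c: "cmod c \<le> \<delta>" using Suc(2)[of m] unfolding c_def by simp
  have P: "(\<Prod>j<Suc m. [:- z j, 1:]) = Polynomial.smult (- c) q + pCons 0 q"
    unfolding q_def c_def by (simp add: mult.commute mult_pCons_left)
  have cq: "cmod (c * coeff q k) \<le> 2 ^ m * \<delta>" for k
  proof -
    consider "k < m" | "k = m" | "k > m" by linarith
    thus ?thesis
    proof cases
      case 1
      have "cmod (c * coeff q k) \<le> \<delta> * (2 ^ m * \<delta>)"
        unfolding norm_mult by (rule mult_mono[OF c IH(3)[OF 1]], auto simp: d)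
      also have "\<dots> \<le> 1 * (2 ^ m * \<delta>)" by (rule mult_right_mono, insert d, auto)
      finally show ?thesis by simp
    next
      case 2
      have "(1::real) \<le> 2 ^ m" by simp
      hence "\<delta> \<le> 2 ^ m * \<delta>" using d mult_right_mono[of 1 "2^m" \<delta>] by simp
      thus ?thesis using 2 IH(1) c by simp
    next
      case 3
      thus ?thesis using IH(2)[OF 3] d by simp
    qed
  qed
  have coeffP: "coeff (\<Prod>j<Suc m. [:- z j, 1:]) k = - c * coeff q k + (case k of 0 \<Rightarrow> 0 | Suc k' \<Rightarrow> coeff q k')" for k
    unfolding P by (cases k, auto)
  show ?case
  proof (intro conjI allI impI)
    show "coeff (\<Prod>j<Suc m. [:- z j, 1:]) (Suc m) = 1"
      unfolding coeffP using IH by simp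
    fix k
    {
      assume "k > Suc m"
      then obtain k' where "k = Suc k'" "k' > m" by (cases k, auto)
      thus "coeff (\<Prod>j<Suc m. [:- z j, 1:]) k = 0" unfolding coeffP using IH by simp
    }
    {
      assume k: "k < Suc m"
      have "2 ^ m * \<delta> \<ge> 0" using d by simp
      show "cmod (coeff (\<Prod>j<Suc m. [:- z j, 1:]) k) \<le> 2 ^ Suc m * \<delta>"
      proof (cases k)
        case 0
        have "cmod (coeff (\<Prod>j<Suc m. [:- z j, 1:]) k) = cmod (c * coeff q k)"
          unfolding coeffP 0 by (simp add: norm_mult)
        also have "\<dots> \<le> 2 ^ m * \<delta>" by (rule cq)
        also have "\<dots> \<le> 2 ^ Suc m * \<delta>" using d by simp
        finally show ?thesis .
      next
        case (Suc k')
        hence k': "k' < m" using k by simp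
        have "cmod (coeff (\<Prod>j<Suc m. [:- z j, 1:]) k) \<le> cmod (c * coeff q k) + cmod (coeff q k')"
          unfolding coeffP Suc using norm_triangle_ineq[of "- c * coeff q (Suc k')" "coeff q k'"] by simp
        also have "\<dots> \<le> 2 ^ m * \<delta> + 2 ^ m * \<delta>" by (rule add_mono[OF cq IH(3)[OF k']])
        also have "\<dots> = 2 ^ Suc m * \<delta>" by simp
        finally show ?thesis .
      qed
    }
  qed
qed


lemma omega_poly:
  fixes \<omega> :: "complex poly"
  assumes c1: "coeff \<omega> n = 1" and c0: "\<forall>k>n. coeff \<omega> k = 0"
  shows "poly \<omega> x = (\<Sum>j<n. coeff \<omega> j * x ^ j) + x ^ n"
proof -
  have "degree \<omega> \<le> n" using c0 by (intro degree_le) auto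
  moreover have "n \<le> degree \<omega>" using c1 by (intro le_degree) simp
  ultimately have dg: "degree \<omega> = n" by simp
  show ?thesis unfolding poly_altdef dg using c1 by (simp add: lessThan_Suc_atMost[symmetric])
qed

lemma node_identity:
  fixes \<omega> :: "complex poly" and x :: complex
  assumes rep: "\<And>y. poly \<omega> y = (\<Sum>j<n. coeff \<omega> j * y ^ j) + y ^ n"
  and x0: "poly \<omega> x = 0" and xa: "x \<noteq> 1/2"
  shows "2 * poly \<omega> (1/2) * gg n x = (\<Sum>j<n. coeff \<omega> j * (\<Sum>l<n-j. (1/2) ^ (n - 1 - l) * x ^ (j + l)))"
proof -
  define a :: complex where "a = 1/2"
  define c where "c = poly \<omega> a"
  have h1: "(x - a) * (\<Sum>l<n-j. a ^ (n - 1 - l) * x ^ (j + l)) = a ^ j * x ^ n - a ^ n * x ^ j" if j: "j < n" for j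
  proof -
    define K where "K = n - j"
    have "(\<Sum>l<n-j. a ^ (n - 1 - l) * x ^ (j + l)) = (\<Sum>l<K. (a ^ j * x ^ j) * (a ^ (K - Suc l) * x ^ l))"
    proof (rule sum.cong)
      show "{..<n-j} = {..<K}" by (simp add: K_def)
    next
      fix l assume "l \<in> {..<K}"
      hence "n - 1 - l = j + (K - Suc l)" unfolding K_def by auto
      thus "a ^ (n - 1 - l) * x ^ (j + l) = (a ^ j * x ^ j) * (a ^ (K - Suc l) * x ^ l)"
        by (simp add: power_add mult_ac)
    qed
    also have "\<dots> = (a ^ j * x ^ j) * (\<Sum>l<K. a ^ (K - Suc l) * x ^ l)" by (simp add: sum_distrib_left)
    finally have "(x - a) * (\<Sum>l<n-j. a ^ (n - 1 - l) * x ^ (j + l)) = (a ^ j * x ^ j) * (x ^ K - a ^ K)"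
      unfolding power_diff_sumr2[of x K a] by (simp add: mult_ac)
    also have "\<dots> = a ^ j * x ^ (j + K) - a ^ (j + K) * x ^ j" by (simp add: power_add algebra_simps)
    also have "j + K = n" unfolding K_def using j by simp
    finally show ?thesis .
  qed
  have "(x - a) * (\<Sum>j<n. coeff \<omega> j * (\<Sum>l<n-j. a ^ (n - 1 - l) * x ^ (j + l)))
     = (\<Sum>j<n. coeff \<omega> j * (a ^ j * x ^ n - a ^ n * x ^ j))"
    unfolding sum_distrib_left[of "x - a"]
  proof (rule sum.cong[OF refl])
    fix j assume "j \<in> {..<n}"
    hence j: "j < n" by simp
    have "(x - a) * (coeff \<omega> j * (\<Sum>l<n-j. a ^ (n - 1 - l) * x ^ (j + l)))
      = coeff \<omega> j * ((x - a) * (\<Sum>l<n-j. a ^ (n - 1 - l) * x ^ (j + l)))" by (simp only: mult.left_commute)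
    thus "(x - a) * (coeff \<omega> j * (\<Sum>l<n-j. a ^ (n - 1 - l) * x ^ (j + l))) = coeff \<omega> j * (a ^ j * x ^ n - a ^ n * x ^ j)"
      unfolding h1[OF j] .
  qed
  also have "\<dots> = x ^ n * (\<Sum>j<n. coeff \<omega> j * a ^ j) - a ^ n * (\<Sum>j<n. coeff \<omega> j * x ^ j)"
    by (simp add: sum_distrib_left sum_subtractf algebra_simps)
  also have "(\<Sum>j<n. coeff \<omega> j * a ^ j) = c - a ^ n" unfolding c_def rep[of a] by simp
  also have "(\<Sum>j<n. coeff \<omega> j * x ^ j) = - (x ^ n)" using x0 unfolding rep[of x] by (simp add: eq_neg_iff_add_eq_0)
  finally have A: "(x - a) * (\<Sum>j<n. coeff \<omega> j * (\<Sum>l<n-j. a ^ (n - 1 - l) * x ^ (j + l))) = c * x ^ n"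
    by (simp add: algebra_simps)
  have xa': "x - a \<noteq> 0" "2 * x - 1 \<noteq> 0" using xa unfolding a_def by (auto simp: field_simps)
  have B: "(x - a) * (2 * c * gg n x) = c * x ^ n"
    unfolding gg_def a_def using xa' unfolding a_def by (simp add: field_simps)
  from A B have "(x - a) * (2 * c * gg n x) = (x - a) * (\<Sum>j<n. coeff \<omega> j * (\<Sum>l<n-j. a ^ (n - 1 - l) * x ^ (j + l)))"
    by simp
  hence "2 * c * gg n x = (\<Sum>j<n. coeff \<omega> j * (\<Sum>l<n-j. a ^ (n - 1 - l) * x ^ (j + l)))"
    using xa'(1) by (simp only: mult_cancel_left) simp
  thus ?thesis unfolding c_def a_def .
qed

lemma G_identity:
  fixes \<omega> :: "complex poly" and z :: "nat \<Rightarrow> complex" and w :: "nat \<Rightarrow> complex"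
  assumes rep: "\<And>y. poly \<omega> y = (\<Sum>j<n. coeff \<omega> j * y ^ j) + y ^ n"
  and x0: "\<And>i. i < m \<Longrightarrow> poly \<omega> (z i) = 0" and xa: "\<And>i. i < m \<Longrightarrow> z i \<noteq> 1/2"
  shows "2 * poly \<omega> (1/2) * (\<Sum>i<m. gg n (z i) * w i) =
     (\<Sum>j<n. coeff \<omega> j * (\<Sum>l<n-j. (1/2) ^ (n - 1 - l) * (\<Sum>i<m. z i ^ (j + l) * w i)))"
proof -
  have "2 * poly \<omega> (1/2) * (\<Sum>i<m. gg n (z i) * w i) = (\<Sum>i<m. (2 * poly \<omega> (1/2) * gg n (z i)) * w i)"
    by (simp add: sum_distrib_left mult_ac)
  also have "\<dots> = (\<Sum>i<m. (\<Sum>j<n. coeff \<omega> j * (\<Sum>l<n-j. (1/2) ^ (n - 1 - l) * z i ^ (j + l))) * w i)"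
    by (rule sum.cong, auto simp: node_identity[OF rep x0 xa])
  also have "\<dots> = (\<Sum>j<n. coeff \<omega> j * (\<Sum>l<n-j. (1/2) ^ (n - 1 - l) * (\<Sum>i<m. z i ^ (j + l) * w i)))"
    by (simp add: sum_distrib_left sum_distrib_right mult_ac sum.swap[of _ "{..<m}"])
  finally show ?thesis .
qed

lemma shifted_sum_le:
  fixes h :: "nat \<Rightarrow> real"
  assumes "\<And>k. h k \<ge> 0"
  shows "(\<Sum>l<n-j. h (j + l)) \<le> (\<Sum>k<n. h k)"
proof -
  have "(\<Sum>l<n-j. h (j + l)) = sum h ((+) j ` {..<n-j})"
    by (subst sum.reindex, auto)
  also have "\<dots> \<le> sum h {..<n}"
    by (rule sum_mono2, insert assms, auto)
  finally show ?thesis .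
qed

lemma G_bound:
  fixes s M :: "nat \<Rightarrow> complex"
  shows "cmod (\<Sum>j<n. s j * (\<Sum>l<n-j. (1/2) ^ (n - 1 - l) * M (j + l))) \<le> (\<Sum>j<n. cmod (s j)) * (\<Sum>k<n. cmod (M k))"
proof -
  have "cmod (\<Sum>j<n. s j * (\<Sum>l<n-j. (1/2) ^ (n - 1 - l) * M (j + l))) \<le> (\<Sum>j<n. cmod (s j) * (\<Sum>l<n-j. cmod (M (j + l))))"
  proof (rule order.trans[OF norm_sum], rule sum_mono)
    fix j assume "j \<in> {..<n}"
    have "cmod (\<Sum>l<n-j. (1/2) ^ (n - 1 - l) * M (j + l)) \<le> (\<Sum>l<n-j. cmod ((1/2) ^ (n - 1 - l) * M (j + l)))"
      by (rule norm_sum)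
    also have "\<dots> \<le> (\<Sum>l<n-j. cmod (M (j + l)))"
    proof (rule sum_mono)
      fix l
      have "cmod ((1/2::complex) ^ (n - 1 - l)) \<le> 1" by (simp add: norm_power power_le_one)
      thus "cmod ((1/2) ^ (n - 1 - l) * M (j + l)) \<le> cmod (M (j + l))"
        unfolding norm_mult by (simp add: mult_left_le_one_le)
    qed
    finally show "cmod (s j * (\<Sum>l<n-j. (1/2) ^ (n - 1 - l) * M (j + l))) \<le> cmod (s j) * (\<Sum>l<n-j. cmod (M (j + l)))"
      unfolding norm_mult by (simp add: mult_left_mono)
  qed
  also have "\<dots> \<le> (\<Sum>j<n. cmod (s j) * (\<Sum>k<n. cmod (M k)))"
    by (rule sum_mono, rule mult_left_mono, rule shifted_sum_le, auto)
  also have "\<dots> = (\<Sum>j<n. cmod (s j)) * (\<Sum>k<n. cmod (M k))" by (simp add: sum_distrib_right)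
  finally show ?thesis .
qed


lemma G_small:
  fixes z :: "nat \<Rightarrow> complex" and v :: "complex vec" and \<delta> :: real
  assumes n: "n \<ge> 1" and d: "\<delta> = 1 / (2 * real n ^ 2 * 8 ^ n)"
  and zb: "\<And>i. i < n \<Longrightarrow> cmod (z i) < \<delta>"
  shows "3 * (cmod (\<Sum>i<n. gg n (z i) * cnj (v $ i)))^2 \<le> (\<Sum>k<n. (cmod (\<Sum>i<n. z i ^ k * cnj (v $ i)))^2)"
proof -
  define G where "G = (\<Sum>i<n. gg n (z i) * cnj (v $ i))"
  define M where "M k = (\<Sum>i<n. z i ^ k * cnj (v $ i))" for k
  define T where "T = (\<Sum>k<n. cmod (M k))"
  define \<omega> where "\<omega> = (\<Prod>j<n. [:- z j, 1:])"
  define c where "c = poly \<omega> (1/2)"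
  have dpos: "\<delta> > 0" unfolding d using n by simp
  have "(1::real) \<le> real n ^ 2" using n by simp
  moreover have "(8::real) ^ 1 \<le> 8 ^ n" by (rule power_increasing, insert n, auto)
  ultimately have "1 * 8 \<le> real n ^ 2 * 8 ^ n" by (intro mult_mono, auto)
  hence "16 \<le> 2 * real n ^ 2 * 8 ^ n" by simp
  hence d16: "\<delta> \<le> 1/16" unfolding d by (simp add: field_simps)
  have zb': "cmod (z i) \<le> \<delta>" if "i < n" for i using zb[OF that] by simp
  have om: "coeff \<omega> n = 1 \<and> (\<forall>k>n. coeff \<omega> k = 0) \<and> (\<forall>k<n. cmod (coeff \<omega> k) \<le> 2 ^ n * \<delta>)"
    unfolding \<omega>_def by (rule omega_coeff, insert dpos d16 zb', auto)
  have rep: "poly \<omega> y = (\<Sum>j<n. coeff \<omega> j * y ^ j) + y ^ n" for y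
    by (rule omega_poly, insert om, auto)
  have x0: "poly \<omega> (z i) = 0" if "i < n" for i
    unfolding \<omega>_def poly_prod by (rule prod_zero, simp, rule bexI[of _ i], insert that, auto)
  have xa: "z i \<noteq> 1/2" if "i < n" for i
  proof
    assume e: "z i = 1/2"
    have "cmod (z i) = 1/2" unfolding e by (simp add: norm_divide)
    thus False using zb'[OF that] d16 by simp
  qed
  have Gid: "2 * c * G = (\<Sum>j<n. coeff \<omega> j * (\<Sum>l<n-j. (1/2) ^ (n - 1 - l) * M (j + l)))"
    unfolding c_def G_def M_def by (rule G_identity[OF rep x0 xa])
  have h1: "2 * cmod c * cmod G \<le> (\<Sum>j<n. cmod (coeff \<omega> j)) * T"
    using G_bound[where n=n and s="coeff \<omega>" and M=M] unfolding Gid[symmetric] T_def by (simp add: norm_mult)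
  have Sb: "(\<Sum>j<n. cmod (coeff \<omega> j)) \<le> real n * (2 ^ n * \<delta>)"
    using sum_bounded_above[of "{..<n}" "\<lambda>j. cmod (coeff \<omega> j)" "2 ^ n * \<delta>"] om by auto
  have T0: "T \<ge> 0" unfolding T_def by (simp add: sum_nonneg)
  have "(\<Sum>j<n. cmod (coeff \<omega> j)) * T \<le> (real n * (2 ^ n * \<delta>)) * T"
    by (rule mult_right_mono[OF Sb T0])
  hence h1': "2 * cmod c * cmod G \<le> real n * 2 ^ n * \<delta> * T"
    using h1 by (simp add: mult.assoc)
  have h2: "(1/4) ^ n \<le> cmod c"
  proof -
    have "cmod c = (\<Prod>j<n. cmod (1/2 - z j))" unfolding c_def \<omega>_def poly_prod by (simp add: prod_norm)
    moreover have "(\<Prod>j<n. (1/4::real)) \<le> (\<Prod>j<n. cmod (1/2 - z j))"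
    proof (rule prod_mono)
      fix j assume j: "j \<in> {..<n}"
      have "cmod (1/2::complex) - cmod (z j) \<le> cmod (1/2 - z j)" by (rule norm_triangle_ineq2)
      thus "0 \<le> (1/4::real) \<and> 1/4 \<le> cmod (1/2 - z j)" using zb'[of j] j d16 by simp
    qed
    ultimately show ?thesis by simp
  qed
  have "2 * (1/4) ^ n * cmod G \<le> 2 * cmod c * cmod G"
    using h2 by (simp add: mult_right_mono)
  hence h3: "2 * (1/4) ^ n * cmod G \<le> real n * 2 ^ n * \<delta> * T" using h1' by linarith
  have "(4::real) ^ n * (2 * (1/4) ^ n * cmod G) \<le> 4 ^ n * (real n * 2 ^ n * \<delta> * T)"
    by (rule mult_left_mono[OF h3], simp)
  moreover have "(4::real) ^ n * (2 * (1/4) ^ n * cmod G) = 2 * cmod G"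
    by (simp add: power_one_over field_simps)
  moreover have "(4::real) ^ n * (real n * 2 ^ n * \<delta> * T) = T / (2 * real n)"
  proof -
    have "(4::real) ^ n * 2 ^ n = 8 ^ n" by (simp flip: power_mult_distrib)
    hence "(4::real) ^ n * (real n * 2 ^ n * \<delta> * T) = real n * 8 ^ n * \<delta> * T" by (simp add: mult_ac)
    also have "\<dots> = T / (2 * real n)" unfolding d using n by (simp add: field_simps power2_eq_square)
    finally show ?thesis .
  qed
  ultimately have Gb: "cmod G \<le> T / (4 * real n)" by simp
  have "(cmod G)^2 \<le> (T / (4 * real n))^2" by (rule power_mono[OF Gb], simp)
  also have "\<dots> = T^2 / (16 * real n ^ 2)" by (simp add: power_divide power_mult_distrib)
  also have "T^2 \<le> (\<Sum>k<n. (cmod (M k))^2) * real n"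
    unfolding T_def using sum_squared_le_sum_of_squares[of "\<lambda>k. cmod (M k)" "{..<n}"] by simp
  hence "T^2 / (16 * real n ^ 2) \<le> (\<Sum>k<n. (cmod (M k))^2) * real n / (16 * real n ^ 2)"
    by (rule divide_right_mono, simp)
  also have "\<dots> = (\<Sum>k<n. (cmod (M k))^2) / (16 * real n)"
    using n by (simp add: power2_eq_square field_simps)
  finally have "3 * (cmod G)^2 \<le> 3 * ((\<Sum>k<n. (cmod (M k))^2) / (16 * real n))" by simp
  also have "\<dots> \<le> (\<Sum>k<n. (cmod (M k))^2)"
  proof -
    have S0: "(\<Sum>k<n. (cmod (M k))^2) \<ge> 0" by (simp add: sum_nonneg)
    have "16 * real n \<ge> 3" using n by simp
    from mult_right_mono[OF this S0]
    have "3 * (\<Sum>k<n. (cmod (M k))^2) \<le> real n * (16 * (\<Sum>k<n. (cmod (M k))^2))" by (simp add: mult_ac)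
    thus ?thesis using S0 n by (simp add: field_simps)
  qed
  finally show ?thesis unfolding G_def M_def .
qed



lemma part2_final:
  fixes f :: "complex \<Rightarrow> complex"
  assumes n: "n \<ge> 1" and f: "\<And>z. f z = z ^ n * (2 - z) / (2 * z - 1)"
  shows "\<exists>\<delta>>0. \<forall>z. inj_on z {..<n} \<and> (\<forall>i<n. norm (z i) < \<delta>) \<longrightarrow> pos_semidef (pick_matrix f n z)"
proof (intro exI[of _ "1 / (2 * real n ^ 2 * 8 ^ n)"] conjI allI impI)
  show "0 < 1 / (2 * real n ^ 2 * 8 ^ n)" using n by simp
  fix z :: "nat \<Rightarrow> complex"
  assume "inj_on z {..<n} \<and> (\<forall>i<n. norm (z i) < 1 / (2 * real n ^ 2 * 8 ^ n))"
  hence zb: "\<And>i. i < n \<Longrightarrow> cmod (z i) < 1 / (2 * real n ^ 2 * 8 ^ n)" by auto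
  have small: "1 / (2 * real n ^ 2 * 8 ^ n) \<le> (1::real) / 2"
  proof -
    have "(1::real) \<le> real n ^ 2" using n by simp
    moreover have "(1::real) \<le> 8 ^ n" by simp
    ultimately have "1 * 1 \<le> real n ^ 2 * 8 ^ n" by (intro mult_mono, auto)
    thus ?thesis by (simp add: field_simps)
  qed
  have zin: "z i \<in> ball 0 1 - {1/2}" if i: "i < n" for i
  proof -
    have c: "cmod (z i) < 1/2" using zb[OF i] small by linarith
    moreover have "z i \<noteq> 1/2"
    proof
      assume e: "z i = 1/2"
      have "cmod (z i) = 1/2" unfolding e by (simp add: norm_divide)
      thus False using c by simp
    qed
    ultimately show ?thesis by auto
  qed
  show "pos_semidef (pick_matrix f n z)"
    unfolding pos_semidef_def
  proof (intro exI[of _ n] conjI pick_carrier pick_herm ballI)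
    fix v :: "complex vec" assume v: "v \<in> carrier_vec n"
    define G where "G = (\<Sum>i<n. gg n (z i) * cnj (v $ i))"
    define M where "M k = (\<Sum>i<n. z i ^ k * cnj (v $ i))" for k
    have q: "(pick_matrix f n z *\<^sub>v v) \<bullet>c v = (\<Sum>k<n. M k * cnj (M k)) - 3 * (G * cnj G)"
      unfolding G_def M_def by (rule pick_qf[OF f zin v])
    have q': "(pick_matrix f n z *\<^sub>v v) \<bullet>c v = complex_of_real ((\<Sum>k<n. (cmod (M k))^2) - 3 * (cmod G)^2)"
      unfolding q by (simp only: complex_norm_square[symmetric] of_real_sum of_real_diff of_real_mult of_real_numeral)
    have "3 * (cmod G)^2 \<le> (\<Sum>k<n. (cmod (M k))^2)"
      unfolding G_def M_def by (rule G_small[OF n refl zb])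
    thus "0 \<le> Re ((pick_matrix f n z *\<^sub>v v) \<bullet>c v)" unfolding q' by simp
    show "Im ((pick_matrix f n z *\<^sub>v v) \<bullet>c v) = 0" unfolding q' by simp
  qed
qed

theorem mainTheorem10:
  fixes n :: nat and f :: "complex \<Rightarrow> complex"
  assumes "n \<ge> 1"
    and "\<And>z. f z = z ^ n * (2 - z) / (2 * z - 1)"
  shows "S_kappa 1 {1/2} f \<and>
    (\<exists>\<delta>>0. \<forall>z. inj_on z {..<n} \<and> (\<forall>i<n. norm (z i) < \<delta>) \<longrightarrow>
        pos_semidef (pick_matrix f n z)) \<and>
    (\<exists>\<delta>'>0. \<forall>z. inj_on z {..<Suc n} \<and> (\<forall>i<Suc n. norm (z i) < \<delta>') \<longrightarrow>
        num_neg_eigenvalues (pick_matrix f (Suc n) z) = 1)"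
proof (intro conjI)
  note f = assms(2)
  have half: "z \<in> ball 0 1 - {1/2}" if "cmod z < 1/2" for z :: complex
  proof -
    have "z \<noteq> 1/2"
    proof
      assume e: "z = 1/2"
      have "cmod z = 1/2" unfolding e by (simp add: norm_divide)
      thus False using that by simp
    qed
    thus ?thesis using that by auto
  qed
  show P3: "\<exists>\<delta>'>0. \<forall>z. inj_on z {..<Suc n} \<and> (\<forall>i<Suc n. norm (z i) < \<delta>') \<longrightarrow>
        num_neg_eigenvalues (pick_matrix f (Suc n) z) = 1"
  proof (intro exI[of _ "1/2"] conjI allI impI)
    fix z :: "nat \<Rightarrow> complex"
    assume a: "inj_on z {..<Suc n} \<and> (\<forall>i<Suc n. norm (z i) < 1/2)"
    show "num_neg_eigenvalues (pick_matrix f (Suc n) z) = 1"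
      by (rule part3[OF f]) (use a half in auto)
  qed simp
  show "\<exists>\<delta>>0. \<forall>z. inj_on z {..<n} \<and> (\<forall>i<n. norm (z i) < \<delta>) \<longrightarrow>
        pos_semidef (pick_matrix f n z)"
    by (rule part2_final[OF assms])
  show "S_kappa 1 {1/2} f"
    unfolding S_kappa_def
  proof (intro conjI allI impI)
    show "admissible_exc {1/2}"
      unfolding admissible_exc_def by (auto simp: norm_divide islimpt_finite)
    fix m :: nat and z :: "nat \<Rightarrow> complex"
    assume "inj_on z {..<m} \<and> z ` {..<m} \<subseteq> ball 0 1 - {1/2}"
    thus "num_neg_eigenvalues (pick_matrix f m z) \<le> 1"
      by (intro univ_bound[OF f]) auto
  next
    define z :: "nat \<Rightarrow> complex" where "z i = complex_of_real (real i / real (4 * Suc n))" for i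
    have zb: "cmod (z i) < 1/2" if "i < Suc n" for i
    proof -
      have "cmod (z i) = \<bar>real i / real (4 * Suc n)\<bar>" unfolding z_def by (rule norm_of_real)
      also have "\<dots> = real i / real (4 * Suc n)" by simp
      also have "\<dots> < 1/2" using that by (simp add: field_simps)
      finally show ?thesis .
    qed
    have inj: "inj_on z {..<Suc n}"
    proof (rule inj_onI)
      fix i j assume "z i = z j"
      hence "real i / real (4 * Suc n) = real j / real (4 * Suc n)" unfolding z_def of_real_eq_iff .
      hence "real i = real j" by (simp only: divide_cancel_right) simp
      thus "i = j" by simp
    qed
    show "\<exists>m z. inj_on z {..<m} \<and> z ` {..<m} \<subseteq> ball 0 1 - {1/2} \<and> num_neg_eigenvalues (pick_matrix f m z) = 1"
    proof (intro exI[of _ "Suc n"] exI[of _ z] conjI)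
      show "inj_on z {..<Suc n}" by (rule inj)
      show "z ` {..<Suc n} \<subseteq> ball 0 1 - {1/2}" unfolding image_subset_iff using zb half by blast
      show "num_neg_eigenvalues (pick_matrix f (Suc n) z) = 1"
        by (rule part3[OF f inj], erule half[OF zb])
    qed
  qed
qed


end
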